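(* Let $L>0$, $\mathbb{T}=[0,L]$ with periodic boundary conditions, $N\ge1$, $D_i>0$, $h_{ij}\in\mathbb{R}$, and $K:\mathbb{T}\to\mathbb{R}$, $K\ge0$, a zero-mean probability density that is twice differentiable with $K'\in L^\infty(\mathbb{T})$. Let $u_0\in C^2(\mathbb{T})^N$ with $u_0(x)>0$ for all $x\in\mathbb{T}$, and let $u$ be the unique solution of \[ \partial_tu_i=D_i\partial_x^2u_i-\partial_x\Big[u_i\,\partial_x\sum_{j=1}^Nh_{ij}(K\ast u_j)\Big],\quad i=1,\dots,N,\qquad u(\cdot,0)=u_0, \] which satisfies $u\in C^1((0,T_* ),L^2(\mathbb{T}))^N\cap C^0([0,T_* ),C^2(\mathbb{T}))^N$, where $T_*=\infty$ if $\|u(t)\|_{L^1}$ is bounded for all time and otherwise $T_*$ is the earliest time at which $\|u(t)\|_{L^1}=2\|u_0\|_{L^1}$. Then $T_*=\infty$, i.e. the solution is global in time.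
   Context: $(K\ast f)(x)=\int_0^LK(x-y)f(y)\,dy$ with periodic extension; for vector-valued $g$, $\|g\|_{L^1}=\sum_i\|g_i\|_{L^1}$. *)

theory Defs
  imports "HOL-Analysis.Analysis"
begin

text \<open>Periodic convolution on the torus [0,L]: (K * f)(x) = int_0^L K(x-y) f(y) dy,
  where K is given as an L-periodic function on the real line.\<close>
definition conv_per :: "real \<Rightarrow> (real \<Rightarrow> real) \<Rightarrow> (real \<Rightarrow> real) \<Rightarrow> real \<Rightarrow> real" where
  "conv_per L K f x = integral {0..L} (\<lambda>y. K (x - y) * f y)"

definition L1vec :: "nat \<Rightarrow> real \<Rightarrow> (nat \<Rightarrow> real \<Rightarrow> real) \<Rightarrow> real" where
  "L1vec N L g = (\<Sum>i<N. integral {0..L} (\<lambda>x. \<bar>g i x\<bar>))"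

definition rhs :: "nat \<Rightarrow> real \<Rightarrow> (nat \<Rightarrow> real) \<Rightarrow> (nat \<Rightarrow> nat \<Rightarrow> real) \<Rightarrow> (real \<Rightarrow> real)
    \<Rightarrow> (nat \<Rightarrow> real \<Rightarrow> real) \<Rightarrow> nat \<Rightarrow> real \<Rightarrow> real" where
  "rhs N L D h K v i x =
     D i * deriv (deriv (v i)) x
     - deriv (\<lambda>y. v i y * deriv (\<lambda>z. \<Sum>j<N. h i j * conv_per L K (v j) z) y) x"

end

theory Submission imports Defs begin

lemma per_nat: assumes "\<forall>x. f (x + L) = (f x::real)" shows "f (x + real n * L) = f x"
proof (induction n)
  case (Suc n)
  have "f (x + real (Suc n) * L) = f ((x + real n * L) + L)" by (simp add: algebra_simps)
  also have "\<dots> = f x" using assms Suc by simp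
  finally show ?case .
qed simp

lemma per_int: assumes "\<forall>x. f (x + L) = (f x::real)" shows "f (x + real_of_int n * L) = f x"
proof (cases "n \<ge> 0")
  case True
  then obtain m where "n = int m" using that[of "nat n"] by simp
  then show ?thesis using per_nat[OF assms] by simp
next
  case False
  then obtain m where m: "n = - int m" using that[of "nat (- n)"] by simp
  have "f x = f ((x + real_of_int n * L) + real m * L)" using m by simp
  also have "\<dots> = f (x + real_of_int n * L)" using per_nat[OF assms] by blast
  finally show ?thesis by simp
qed

lemma per_red: fixes x L :: real assumes "L > 0" "\<forall>x. f (x + L) = (f x::real)"
  shows "\<exists>y\<in>{0..L}. f x = f y"
proof -
  define n where "n = floor (x / L)"
  have "real_of_int n \<le> x / L" "x / L < real_of_int n + 1" unfolding n_def by linarith+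
  then have "real_of_int n * L \<le> x" "x < (real_of_int n + 1) * L" using assms(1)
    by (simp_all add: field_simps)
  then have 1: "x - real_of_int n * L \<in> {0..L}" by (auto simp: algebra_simps)
  have 2: "f (x - real_of_int n * L) = f x"
    using per_int[OF assms(2), of "x - real_of_int n * L" n] by simp
  show ?thesis using 1 2 by (intro bexI[where x="x - real_of_int n * L"]) auto
qed

lemma deriv_per: assumes "\<forall>x. f (x + L) = (f x::real)" "\<forall>x. (f has_real_derivative f1 x) (at x)"
  shows "f1 (x + L) = f1 x"
proof -
  have "((\<lambda>x. f (x + L)) has_real_derivative f1 (x + L) * 1) (at x)"
    by (rule DERIV_chain2[of f]) (use assms in \<open>auto intro!: derivative_eq_intros\<close>)
  moreover have "(\<lambda>x. f (x + L)) = f" using assms by auto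
  ultimately have "(f has_real_derivative f1 (x + L)) (at x)" by simp
  then show ?thesis using assms(2) DERIV_unique by blast
qed

lemma min_second_deriv:
  fixes f f1 :: "real \<Rightarrow> real"
  assumes d1: "\<forall>x. (f has_real_derivative f1 x) (at x)" and d2: "(f1 has_real_derivative d) (at x0)"
    and mn: "\<forall>x. f x0 \<le> f x"
  shows "f1 x0 = 0 \<and> d \<ge> 0"
proof -
  have z: "f1 x0 = 0" using DERIV_local_min[where f=f and x=x0 and l="f1 x0" and d=1] d1 mn by auto
  moreover have "d \<ge> 0"
  proof (rule ccontr)
    assume "\<not> d \<ge> 0"
    then obtain e where e: "e > 0" "\<forall>h>0. h < e \<longrightarrow> f1 x0 > f1 (x0 + h)"
      using DERIV_neg_dec_right[OF d2] by auto
    obtain z where z1: "x0 < z" "z < x0 + e/2" "f (x0 + e/2) - f x0 = (x0 + e/2 - x0) * f1 z"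
      using MVT2[of x0 "x0 + e/2" f f1] d1 e by auto
    have "f1 (x0 + (z - x0)) < 0" using e(2)[rule_format, of "z - x0"] z1 z by auto
    then have "e * f1 z < 0" using z1 e by (simp add: mult_pos_neg)
    then have "f (x0 + e/2) - f x0 < 0" using z1 by (simp add: field_simps)
    moreover have "f x0 \<le> f (x0 + e/2)" using mn by blast
    ultimately show False by linarith
  qed
  ultimately show ?thesis by simp
qed

lemma shift_deriv: assumes "\<forall>x. (K has_real_derivative K1 x) (at x)"
  shows "((\<lambda>x. K (x - y)) has_real_derivative K1 (x - y)) (at x)"
proof -
  have "((\<lambda>x. x - y) has_real_derivative 1) (at x)" by (auto intro!: derivative_eq_intros)
  from DERIV_chain2[OF assms[rule_format] this] show ?thesis by simp
qed

lemma shift_deriv2: assumes "\<forall>x. (K has_real_derivative K1 x) (at x)"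
  shows "((\<lambda>y. K (x - y)) has_real_derivative - K1 (x - y)) (at y)"
proof -
  have "((\<lambda>y. x - y) has_real_derivative -1) (at y)" by (auto intro!: derivative_eq_intros)
  from DERIV_chain2[OF assms[rule_format] this] show ?thesis by simp
qed

lemma deriv_cont: assumes "\<forall>x. (K has_real_derivative K1 x) (at x)"
  shows "continuous_on S K"
  using assms by (intro continuous_at_imp_continuous_on ballI DERIV_isCont) blast

lemma cshift: assumes "continuous_on UNIV (K::real\<Rightarrow>real)" shows "continuous_on A (\<lambda>y. K (x - y))"
  by (rule continuous_on_compose2[OF assms, where f="\<lambda>y. x - y"]) (auto intro!: continuous_on_diff continuous_on_const continuous_on_id)

lemma conv_deriv:
  fixes K K1 f f1 :: "real \<Rightarrow> real" and L :: real
  assumes L: "L \<ge> 0" and dK: "\<forall>x. (K has_real_derivative K1 x) (at x)"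
    and cK1: "continuous_on UNIV K1" and pK: "\<forall>x. K (x + L) = K x"
    and df: "\<forall>x. (f has_real_derivative f1 x) (at x)"
    and cf1: "continuous_on UNIV f1" and pf: "\<forall>x. f (x + L) = f x"
  shows "(conv_per L K f has_real_derivative conv_per L K f1 x) (at x)"
proof -
  have cK: "continuous_on S K" for S using deriv_cont[OF dK] .
  have cf: "continuous_on S f" for S using deriv_cont[OF df] .
  have cK1': "continuous_on S K1" for S using cK1 continuous_on_subset by blast
  have cf1': "continuous_on S f1" for S using cf1 continuous_on_subset by blast
  have c1: "continuous_on (UNIV \<times> cbox 0 L) (\<lambda>(x, y). K1 (x - y) * f y)"
  proof -
    have a: "continuous_on A (\<lambda>p::real\<times>real. K1 (fst p - snd p))" for A
      by (rule continuous_on_compose2[OF cK1, where f="\<lambda>p. fst p - snd p"]) (auto intro!: continuous_on_diff continuous_on_fst continuous_on_snd continuous_on_id)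
    have b: "continuous_on A (\<lambda>p::real\<times>real. f (snd p))" for A
      by (rule continuous_on_compose2[OF cf, where f="\<lambda>p. snd p" and s=A and t=UNIV]) (auto intro!: continuous_on_snd continuous_on_id)
    show ?thesis unfolding split_beta' by (rule continuous_on_mult[OF a b])
  qed
  have lb: "((\<lambda>x. integral (cbox 0 L) (\<lambda>y. K (x - y) * f y)) has_field_derivative
      integral (cbox 0 L) (\<lambda>y. K1 (x - y) * f y)) (at x within UNIV)"
  proof (rule leibniz_rule_field_derivative[where fx="\<lambda>x y. K1 (x - y) * f y"])
    fix x y :: real
    show "((\<lambda>x. K (x - y) * f y) has_field_derivative K1 (x - y) * f y) (at x within UNIV)"
      using shift_deriv[OF dK, of y x] by (auto intro!: derivative_eq_intros)
  next
    fix x :: real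
    show "(\<lambda>y. K (x - y) * f y) integrable_on cbox 0 L"
      by (intro integrable_continuous continuous_on_mult cshift[OF cK] cf)
  qed (use c1 in auto)
  have i1: "(\<lambda>y. K1 (x - y) * f y) integrable_on {0..L}"
    by (intro integrable_continuous_interval continuous_on_mult cshift[OF cK1'] cf)
  have i2: "(\<lambda>y. K (x - y) * f1 y) integrable_on {0..L}"
    by (intro integrable_continuous_interval continuous_on_mult cshift[OF cK] cf1')
  have ftc: "((\<lambda>y. - K1 (x - y) * f y + K (x - y) * f1 y) has_integral
      (K (x - L) * f L - K (x - 0) * f 0)) {0..L}"
  proof (rule fundamental_theorem_of_calculus[OF L])
    fix y assume "y \<in> {0..L}"
    have "((\<lambda>y. K (x - y) * f y) has_real_derivative - K1 (x - y) * f y + K (x - y) * f1 y) (at y)"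
      using shift_deriv2[OF dK, of x y] df by (auto intro!: derivative_eq_intros)
    then show "((\<lambda>y. K (x - y) * f y) has_vector_derivative - K1 (x - y) * f y + K (x - y) * f1 y)
        (at y within {0..L})"
      using has_real_derivative_iff_has_vector_derivative has_field_derivative_at_within by blast
  qed
  have "K (x - L) = K x" using pK by (metis diff_add_cancel)
  moreover have "f L = f 0" using pf by (metis add_0)
  ultimately have "integral {0..L} (\<lambda>y. - K1 (x - y) * f y + K (x - y) * f1 y) = 0"
    using ftc by (simp add: integral_unique)
  moreover have "integral {0..L} (\<lambda>y. - K1 (x - y) * f y + K (x - y) * f1 y)
      = - integral {0..L} (\<lambda>y. K1 (x - y) * f y) + integral {0..L} (\<lambda>y. K (x - y) * f1 y)"
    using i1 i2 integral_diff[OF i2 i1] by (simp add: integral_add integral_neg)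
  ultimately have "integral {0..L} (\<lambda>y. K1 (x - y) * f y) = integral {0..L} (\<lambda>y. K (x - y) * f1 y)"
    by simp
  then have e2: "integral (cbox 0 L) (\<lambda>y. K1 (x - y) * f y) = conv_per L K f1 x"
    unfolding conv_per_def cbox_interval by simp
  have e1: "(\<lambda>x. integral (cbox 0 L) (\<lambda>y. K (x - y) * f y)) = conv_per L K f"
    by (rule ext) (simp only: conv_per_def cbox_interval)
  show ?thesis using lb unfolding e1 e2 .
qed

theorem theorem3p10:
  fixes L :: real and N :: nat and D :: "nat \<Rightarrow> real" and h :: "nat \<Rightarrow> nat \<Rightarrow> real"
    and K :: "real \<Rightarrow> real" and u0 :: "nat \<Rightarrow> real \<Rightarrow> real"
    and u :: "nat \<Rightarrow> real \<Rightarrow> real \<Rightarrow> real" and Tstar :: ereal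
  assumes L_pos: "L > 0"
    and N_pos: "N \<ge> 1"
    and D_pos: "\<forall>i<N. D i > 0"
    \<comment> \<open>kernel: L-periodic, nonnegative, probability density with zero mean,
        twice differentiable, K' bounded\<close>
    and K_per: "\<forall>x. K (x + L) = K x"
    and K_nonneg: "\<forall>x. K x \<ge> 0"
    and K_int: "K integrable_on {0..L}"
    and K_mass: "integral {0..L} K = 1"
    and K_mean: "integral {-L/2..L/2} (\<lambda>x. x * K x) = 0"
    and K_diff: "\<forall>x. K differentiable (at x) \<and> deriv K differentiable (at x)"
    and K'_bdd: "bounded (range (deriv K))"
    \<comment> \<open>initial datum: L-periodic, C^2, strictly positive\<close>
    and u0_per: "\<forall>i<N. \<forall>x. u0 i (x + L) = u0 i x"
    and u0_C2: "\<forall>i<N. (\<forall>x. u0 i differentiable (at x) \<and> deriv (u0 i) differentiable (at x))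
                      \<and> continuous_on UNIV (deriv (deriv (u0 i)))"
    and u0_pos: "\<forall>i<N. \<forall>x. u0 i x > 0"
    \<comment> \<open>u solves the system on [0, T_*)\<close>
    and T_pos: "Tstar > 0"
    and u_init: "\<forall>i<N. u i 0 = u0 i"
    and u_per: "\<forall>i<N. \<forall>t. 0 \<le> t \<and> ereal t < Tstar \<longrightarrow> (\<forall>x. u i t (x + L) = u i t x)"
    and u_C2: "\<forall>i<N. \<forall>t. 0 \<le> t \<and> ereal t < Tstar \<longrightarrow>
                 (\<forall>x. u i t differentiable (at x) \<and> deriv (u i t) differentiable (at x))"
    and u_cont: "\<forall>i<N.
         continuous_on ({t. 0 \<le> t \<and> ereal t < Tstar} \<times> UNIV) (\<lambda>(t, x). u i t x)
       \<and> continuous_on ({t. 0 \<le> t \<and> ereal t < Tstar} \<times> UNIV) (\<lambda>(t, x). deriv (u i t) x)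
       \<and> continuous_on ({t. 0 \<le> t \<and> ereal t < Tstar} \<times> UNIV) (\<lambda>(t, x). deriv (deriv (u i t)) x)"
    and u_pde: "\<forall>i<N. \<forall>t x. 0 < t \<and> ereal t < Tstar \<longrightarrow>
         ((\<lambda>s. u i s x) has_real_derivative rhs N L D h K (\<lambda>j. u j t) i x) (at t)"
    and u_dt_cont: "\<forall>i<N.
         continuous_on ({t. 0 < t \<and> ereal t < Tstar} \<times> UNIV) (\<lambda>(t, x). rhs N L D h K (\<lambda>j. u j t) i x)"
    \<comment> \<open>definition of T_*: if finite, the earliest time at which the L^1 norm reaches 2||u0||\<close>
    and Tstar_def: "Tstar \<noteq> \<infinity> \<longrightarrow>
         (\<forall>t. 0 \<le> t \<and> ereal t < Tstar \<longrightarrow> L1vec N L (\<lambda>j. u j t) < 2 * L1vec N L u0)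
       \<and> ((\<lambda>t. L1vec N L (\<lambda>j. u j t)) \<longlongrightarrow> 2 * L1vec N L u0) (at_left (real_of_ereal Tstar))"
  shows "Tstar = \<infinity> \<and> (\<exists>B. \<forall>t\<ge>0. L1vec N L (\<lambda>j. u j t) \<le> B)"
proof -
  define T where "T = {t. 0 \<le> t \<and> ereal t < Tstar}"
  have T0: "0 \<in> T" using T_pos unfolding T_def by (simp add: zero_ereal_def)
  have inT: "t \<in> T" if "0 \<le> t" "t \<le> t1" "t1 \<in> T" for t t1
  proof -
    have a: "ereal t \<le> ereal t1" using that by simp
    have "ereal t1 < Tstar" using that unfolding T_def by simp
    then have "ereal t < Tstar" using order.strict_trans1[OF a] by blast
    then show ?thesis using that unfolding T_def by simp
  qed
  have du: "(u j t has_real_derivative deriv (u j t) x) (at x)" if "j < N" "t \<in> T" for j t x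
    using u_C2 that unfolding T_def DERIV_deriv_iff_real_differentiable by blast
  have ddu: "(deriv (u j t) has_real_derivative deriv (deriv (u j t)) x) (at x)" if "j < N" "t \<in> T" for j t x
    using u_C2 that unfolding T_def DERIV_deriv_iff_real_differentiable by blast
  have cont2: "continuous_on (T \<times> UNIV) (\<lambda>(t, x). u j t x)"
     "continuous_on (T \<times> UNIV) (\<lambda>(t, x). deriv (u j t) x)"
     "continuous_on (T \<times> UNIV) (\<lambda>(t, x). deriv (deriv (u j t)) x)" if "j < N" for j
    using u_cont that unfolding T_def by blast+
  have slice: "continuous_on UNIV (\<lambda>x. g t x)"
    if "continuous_on (T \<times> UNIV) (\<lambda>(t, x). g t x)" "t \<in> T" for g :: "real \<Rightarrow> real \<Rightarrow> real" and t
  proof -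
    have "continuous_on UNIV (\<lambda>x. (\<lambda>(t, x). g t x) (Pair t x))"
      by (rule continuous_on_compose2[OF that(1)]) (use that(2) in \<open>auto intro!: continuous_intros\<close>)
    then show ?thesis by simp
  qed
  have cu1: "continuous_on UNIV (deriv (u j t))" if "j < N" "t \<in> T" for j t
    using slice[OF cont2(2)[OF that(1)] that(2)] by simp
  have cu2: "continuous_on UNIV (deriv (deriv (u j t)))" if "j < N" "t \<in> T" for j t
    using slice[OF cont2(3)[OF that(1)] that(2)] by simp
  have pu: "\<forall>x. u j t (x + L) = u j t x" if "j < N" "t \<in> T" for j t
    using u_per that unfolding T_def by blast
  have pu1: "\<forall>x. deriv (u j t) (x + L) = deriv (u j t) x" if "j < N" "t \<in> T" for j t
    using deriv_per[OF pu[OF that]] du[OF that] by blast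
  have dK: "\<forall>x. (K has_real_derivative deriv K x) (at x)"
    using K_diff DERIV_deriv_iff_real_differentiable by blast
  have cK1: "continuous_on UNIV (deriv K)"
    using K_diff by (intro continuous_at_imp_continuous_on ballI differentiable_imp_continuous_within) blast
  have cK: "continuous_on S K" for S using deriv_cont[OF dK] .
  have Lge: "L \<ge> 0" using L_pos by simp
  define W where "W = (\<lambda>i t z. \<Sum>j<N. h i j * conv_per L K (u j t) z)"
  define W1 where "W1 = (\<lambda>i t z. \<Sum>j<N. h i j * conv_per L K (deriv (u j t)) z)"
  define W2 where "W2 = (\<lambda>i t z. \<Sum>j<N. h i j * conv_per L K (deriv (deriv (u j t))) z)"
  have dW: "(W i t has_real_derivative W1 i t x) (at x)" if "t \<in> T" for i t x
    unfolding W_def W1_def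
    by (intro DERIV_sum DERIV_cmult conv_deriv[OF Lge dK cK1 K_per] allI du cu1 pu) (use that in auto)
  have dW1: "(W1 i t has_real_derivative W2 i t x) (at x)" if "t \<in> T" for i t x
    unfolding W2_def W1_def
    by (intro DERIV_sum DERIV_cmult conv_deriv[OF Lge dK cK1 K_per] allI ddu cu2 pu1) (use that in auto)
  have pconv: "conv_per L K f (x + L) = conv_per L K f x" for f x
  proof -
    have "K (x + L - y) = K (x - y)" for y using K_per[rule_format, of "x - y"] by (simp add: algebra_simps)
    then show ?thesis unfolding conv_per_def by simp
  qed
  have pW1: "W1 i t (x + L) = W1 i t x" if "t \<in> T" for i t x
  proof -
    have "\<forall>x. W i t (x + L) = W i t x" unfolding W_def using pconv by simp
    then show ?thesis using deriv_per dW[OF that] by blast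
  qed
  have rhs_eq: "rhs N L D h K (\<lambda>j. u j t) i x
      = D i * deriv (deriv (u i t)) x - (deriv (u i t) x * W1 i t x + u i t x * W2 i t x)"
    if "t \<in> T" "i < N" for i t x
  proof -
    have "deriv (W i t) = W1 i t" using dW[OF that(1)] DERIV_imp_deriv by blast
    then have e: "deriv (\<lambda>z. \<Sum>j<N. h i j * conv_per L K (u j t) z) = W1 i t"
      unfolding W_def by simp
    have "((\<lambda>y. u i t y * W1 i t y) has_real_derivative
       (deriv (u i t) x * W1 i t x + u i t x * W2 i t x)) (at x)"
      using du[OF that(2,1)] dW1[OF that(1)] by (auto intro!: derivative_eq_intros)
    then show ?thesis unfolding rhs_def e using DERIV_imp_deriv by metis
  qed
  have dflux: "((\<lambda>y. D i * deriv (u i t) y - u i t y * W1 i t y) has_real_derivative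
      rhs N L D h K (\<lambda>j. u j t) i x) (at x)" if "t \<in> T" "i < N" for i t x
    unfolding rhs_eq[OF that]
    using du[OF that(2,1)] dW1[OF that(1)] ddu[OF that(2,1)]
    by (auto intro!: derivative_eq_intros)
  have Tlt: "ereal r < Tstar" if "r \<le> t" "t \<in> T" for r t
  proof -
    have a: "ereal r \<le> ereal t" using that by simp
    show ?thesis using order.strict_trans1[OF a] that unfolding T_def by simp
  qed
  have mass: "integral {0..L} (u i t) = integral {0..L} (u0 i)" if iN: "i < N" and tT: "t \<in> T" for i t
  proof -
    define M where "M = (\<lambda>s. integral {0..L} (u i s))"
    have cM: "continuous_on T M"
    proof -
      have "continuous_on (T \<times> cbox 0 L) (\<lambda>(s, x). u i s x)"
        by (rule continuous_on_subset[OF cont2(1)[OF iN]]) auto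
      from integral_continuous_on_param[OF this] show ?thesis unfolding M_def cbox_interval by simp
    qed
    have dM: "(M has_real_derivative 0) (at s)" if s0: "0 < s" and sT: "ereal s < Tstar" for s
    proof -
      obtain b where b: "s < b" "ereal b < Tstar" using ereal_dense2[OF sT] by auto
      define U where "U = {s/2<..<b}"
      have sU: "s \<in> U" unfolding U_def using s0 b by auto
      have oU: "open U" and cU: "convex U" unfolding U_def by (auto simp: convex_real_interval)
      have UT: "0 < r \<and> ereal r < Tstar" if "r \<in> U" for r
      proof -
        have a: "ereal r \<le> ereal b" using that unfolding U_def by simp
        have "ereal r < Tstar" using order.strict_trans1[OF a b(2)] .
        moreover have "0 < r" using that s0 unfolding U_def by simp
        ultimately show ?thesis by simp
      qed
      have UT': "r \<in> T" if "r \<in> U" for r using UT[OF that] unfolding T_def by auto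
      have ld: "((\<lambda>r. integral (cbox 0 L) (\<lambda>x. u i r x)) has_field_derivative
          integral (cbox 0 L) (\<lambda>x. rhs N L D h K (\<lambda>j. u j s) i x)) (at s within U)"
      proof (rule leibniz_rule_field_derivative[where fx="\<lambda>r x. rhs N L D h K (\<lambda>j. u j r) i x"])
        fix r x assume rU: "r \<in> U"
        have pde: "\<forall>t x. 0 < t \<and> ereal t < Tstar \<longrightarrow>
           ((\<lambda>s. u i s x) has_real_derivative rhs N L D h K (\<lambda>j. u j t) i x) (at t)"
          using u_pde iN by blast
        have "((\<lambda>r. u i r x) has_real_derivative rhs N L D h K (\<lambda>j. u j r) i x) (at r)"
          using pde UT[OF rU] by blast
        then show "((\<lambda>r. u i r x) has_field_derivative rhs N L D h K (\<lambda>j. u j r) i x) (at r within U)"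
          by (rule has_field_derivative_at_within)
      next
        fix r assume "r \<in> U"
        then have "continuous_on UNIV (\<lambda>x. u i r x)"
          using slice[OF cont2(1)[OF iN]] UT' by simp
        then show "(\<lambda>x. u i r x) integrable_on cbox 0 L"
          using continuous_on_subset[OF _ subset_UNIV] integrable_continuous by blast
      next
        show "continuous_on (U \<times> cbox 0 L) (\<lambda>(r, x). rhs N L D h K (\<lambda>j. u j r) i x)"
          by (rule continuous_on_subset[OF u_dt_cont[rule_format, OF iN]]) (use UT in auto)
      qed (use sU cU in auto)
      have sT': "s \<in> T" using s0 sT unfolding T_def by simp
      have "(rhs N L D h K (\<lambda>j. u j s) i has_integral
          ((\<lambda>y. D i * deriv (u i s) y - u i s y * W1 i s y) L - (\<lambda>y. D i * deriv (u i s) y - u i s y * W1 i s y) 0)) {0..L}"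
      proof (rule fundamental_theorem_of_calculus[OF Lge])
        fix x :: real
        have "((\<lambda>y. D i * deriv (u i s) y - u i s y * W1 i s y) has_real_derivative
          rhs N L D h K (\<lambda>j. u j s) i x) (at x within {0..L})"
          by (rule has_field_derivative_at_within[OF dflux[OF sT' iN]])
        then show "((\<lambda>y. D i * deriv (u i s) y - u i s y * W1 i s y) has_vector_derivative
          rhs N L D h K (\<lambda>j. u j s) i x) (at x within {0..L})"
          by (simp add: has_real_derivative_iff_has_vector_derivative)
      qed
      moreover have "u i s L = u i s 0" "deriv (u i s) L = deriv (u i s) 0" "W1 i s L = W1 i s 0"
        using pu[OF iN sT', rule_format, of 0] pu1[OF iN sT', rule_format, of 0] pW1[OF sT', of i 0] by auto
      ultimately have "integral {0..L} (rhs N L D h K (\<lambda>j. u j s) i) = 0"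
        by (simp add: integral_unique)
      then show ?thesis using ld at_within_open[OF sU oU] unfolding M_def cbox_interval by simp
    qed
    have "M t = M 0"
    proof (cases "t = 0")
      case False
      then have t0: "0 < t" using tT unfolding T_def by simp
      show ?thesis
      proof (rule DERIV_isconst2[OF t0])
        show "continuous_on {0..t} M" by (rule continuous_on_subset[OF cM]) (use inT tT in auto)
        fix r assume "0 < r" "r < t"
        then show "(M has_real_derivative 0) (at r)" using dM Tlt[OF _ tT] by simp
      qed (use t0 in auto)
    qed simp
    then show ?thesis unfolding M_def using u_init iN by simp
  qed
  have pde: "((\<lambda>s. u i s x) has_real_derivative rhs N L D h K (\<lambda>j. u j t) i x) (at t)"
    if "i < N" "0 < t" "ereal t < Tstar" for i t x
    using u_pde that by blast
  have pos: "\<forall>s\<in>{0..T1}. \<forall>y\<in>{0..L}. u i s y \<ge> 0" if iN: "i < N" and T1: "T1 \<in> T" for i T1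
  proof -
    have sT: "s \<in> T" if "s \<in> {0..T1}" for s using inT T1 that by auto
    define Q where "Q = {0..T1} \<times> {0..L::real}"
    have cQ: "compact Q" unfolding Q_def by (intro compact_Times compact_Icc)
    have QT: "Q \<subseteq> T \<times> UNIV" using sT unfolding Q_def by auto
    obtain Kb where Kb: "Kb > 0" "\<forall>s\<in>{-L..L}. \<bar>K s\<bar> \<le> Kb"
    proof -
      have "bounded (K ` {-L..L})" by (intro compact_imp_bounded compact_continuous_image cK compact_Icc)
      then show ?thesis using that unfolding bounded_pos by auto
    qed
    have "\<forall>j. \<exists>C. j < N \<longrightarrow> C > 0 \<and> (\<forall>p\<in>Q. \<bar>deriv (deriv (u j (fst p))) (snd p)\<bar> \<le> C)"
    proof (intro allI)
      fix j
      show "\<exists>C. j < N \<longrightarrow> C > 0 \<and> (\<forall>p\<in>Q. \<bar>deriv (deriv (u j (fst p))) (snd p)\<bar> \<le> C)"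
      proof (cases "j < N")
        case jN: True
        have "continuous_on Q (\<lambda>(t, x). deriv (deriv (u j t)) x)"
          by (rule continuous_on_subset[OF cont2(3)[OF jN] QT])
        then have "bounded ((\<lambda>(t, x). deriv (deriv (u j t)) x) ` Q)"
          by (intro compact_imp_bounded compact_continuous_image cQ)
        then obtain C where "C > 0" "\<forall>p\<in>Q. \<bar>deriv (deriv (u j (fst p))) (snd p)\<bar> \<le> C"
          unfolding bounded_pos by (auto simp: case_prod_beta)
        then show ?thesis by blast
      qed simp
    qed
    from choice[OF this] obtain Cf where
      Cf: "\<And>j. j < N \<Longrightarrow> Cf j > 0 \<and> (\<forall>p\<in>Q. \<bar>deriv (deriv (u j (fst p))) (snd p)\<bar> \<le> Cf j)"
      by blast
    define C where "C = (\<Sum>j<N. \<bar>h i j\<bar> * (Kb * Cf j * L))"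
    have W2b: "\<bar>W2 i s y\<bar> \<le> C" if sy: "s \<in> {0..T1}" "y \<in> {0..L}" for s y
    proof -
      have "\<bar>W2 i s y\<bar> \<le> (\<Sum>j<N. \<bar>h i j * conv_per L K (deriv (deriv (u j s))) y\<bar>)"
        unfolding W2_def by (rule sum_abs)
      also have "\<dots> \<le> C" unfolding C_def
      proof (rule sum_mono)
        fix j assume "j \<in> {..<N}"
        then have jN: "j < N" by simp
        have cg: "continuous_on {0..L} (deriv (deriv (u j s)))"
          by (rule continuous_on_subset[OF cu2[OF jN sT[OF sy(1)]] subset_UNIV])
        have integ: "((\<lambda>z. K (y - z) * deriv (deriv (u j s)) z) has_integral
            conv_per L K (deriv (deriv (u j s))) y) {0..L}"
          unfolding conv_per_def
          by (intro integrable_integral integrable_continuous_interval continuous_on_mult cshift[OF cK] cg)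
        have "norm (conv_per L K (deriv (deriv (u j s))) y) \<le> (Kb * Cf j) * Henstock_Kurzweil_Integration.content {0..L}"
        proof (rule has_integral_bound_real[OF _ finite.emptyI integ])
          show "0 \<le> Kb * Cf j" using Kb Cf[OF jN] by simp
          fix z assume z: "z \<in> {0..L} - {}"
          then have "y - z \<in> {-L..L}" using sy(2) by auto
          then have k: "\<bar>K (y - z)\<bar> \<le> Kb" using Kb by auto
          have "(s, z) \<in> Q" using sy(1) z unfolding Q_def by auto
          then have g: "\<bar>deriv (deriv (u j s)) z\<bar> \<le> Cf j" using Cf[OF jN] by fastforce
          have "\<bar>K (y - z)\<bar> * \<bar>deriv (deriv (u j s)) z\<bar> \<le> Kb * Cf j"
            by (rule mult_mono[OF k g]) (use Kb in auto)
          then show "norm (K (y - z) * deriv (deriv (u j s)) z) \<le> Kb * Cf j"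
            by (simp add: abs_mult)
        qed
        then have "\<bar>conv_per L K (deriv (deriv (u j s))) y\<bar> \<le> Kb * Cf j * L" using Lge by simp
        then show "\<bar>h i j * conv_per L K (deriv (deriv (u j s))) y\<bar> \<le> \<bar>h i j\<bar> * (Kb * Cf j * L)"
          by (simp add: abs_mult mult_left_mono)
      qed
      finally show ?thesis .
    qed
    define lam where "lam = C + 1"
    have main: "u i s y + \<epsilon> * exp (lam * s) > 0" if eps: "\<epsilon> > 0" and sy: "s \<in> {0..T1}" "y \<in> {0..L}"
      for \<epsilon> s y
    proof (rule ccontr)
      assume neg: "\<not> ?thesis"
      define z where "z = (\<lambda>s y. u i s y + \<epsilon> * exp (lam * s))"
      define S where "S = {s \<in> {0..T1}. \<exists>y\<in>{0..L}. z s y \<le> 0}"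
      have Sne: "S \<noteq> {}" using neg sy unfolding S_def z_def by force
      define P where "P = {p \<in> Q. z (fst p) (snd p) \<le> 0}"
      have czQ: "continuous_on Q (\<lambda>p. z (fst p) (snd p))"
      proof -
        have a: "continuous_on Q (\<lambda>p. u i (fst p) (snd p))"
          using continuous_on_subset[OF cont2(1)[OF iN] QT] by (simp add: split_beta')
        have b: "continuous_on Q (\<lambda>p::real\<times>real. \<epsilon> * exp (lam * fst p))"
          by (intro continuous_intros)
        show ?thesis unfolding z_def by (rule continuous_on_add[OF a b])
      qed
      have "closed P" unfolding P_def
        by (rule continuous_on_closed_Collect_le[OF czQ continuous_on_const compact_imp_closed[OF cQ]])
      then have "compact (Q \<inter> P)" using compact_Int_closed[OF cQ] by blast
      moreover have "Q \<inter> P = P" unfolding P_def by auto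
      ultimately have cP: "compact P" by simp
      have SP: "S = fst ` P"
      proof
        show "S \<subseteq> fst ` P"
        proof
          fix s assume "s \<in> S"
          then obtain y where "s \<in> {0..T1}" "y \<in> {0..L}" "z s y \<le> 0" unfolding S_def by auto
          then have "(s, y) \<in> P" unfolding P_def Q_def by auto
          then show "s \<in> fst ` P" by force
        qed
      next
        show "fst ` P \<subseteq> S" unfolding S_def P_def Q_def by force
      qed
      have "compact S" unfolding SP
        by (rule compact_continuous_image[OF continuous_on_fst[OF continuous_on_id] cP])
      have bS: "bdd_below S" unfolding S_def by (rule bdd_belowI[of _ 0]) auto
      define t0 where "t0 = Inf S"
      have t0S: "t0 \<in> S" unfolding t0_def
        by (rule closed_contains_Inf[OF Sne bS compact_imp_closed[OF \<open>compact S\<close>]])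
      then obtain x0 where t0r: "t0 \<in> {0..T1}" and x0: "x0 \<in> {0..L}" "z t0 x0 \<le> 0"
        unfolding S_def by auto
      have before: "z r y > 0" if "r \<in> {0..T1}" "r < t0" "y \<in> {0..L}" for r y
      proof (rule ccontr)
        assume "\<not> z r y > 0"
        then have "z r y \<le> 0" by simp
        then have "r \<in> S" using that unfolding S_def by blast
        then have "t0 \<le> r" unfolding t0_def using bS by (rule cInf_lower)
        then show False using that by simp
      qed
      have t0T: "t0 \<in> T" using sT t0r .
      have "t0 \<noteq> 0"
      proof
        assume "t0 = 0"
        then have "z t0 x0 = u0 i x0 + \<epsilon>" unfolding z_def using u_init iN by simp
        moreover have "u0 i x0 > 0" using u0_pos iN by simp
        ultimately show False using x0 eps by simp
      qed
      then have t0pos: "t0 > 0" using t0r by auto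
      have t0lt: "ereal t0 < Tstar" using t0T unfolding T_def by simp
      have zpde: "((\<lambda>s. z s y) has_real_derivative
          rhs N L D h K (\<lambda>j. u j t0) i y + \<epsilon> * (exp (lam * t0) * lam)) (at t0)" for y
        unfolding z_def using pde[OF iN t0pos t0lt, of y] by (auto intro!: derivative_eq_intros)
      have zge: "z t0 y \<ge> 0" if y: "y \<in> {0..L}" for y
      proof -
        have "isCont (\<lambda>s. z s y) t0" using DERIV_isCont[OF zpde] .
        then have "((\<lambda>s. z s y) \<longlongrightarrow> z t0 y) (at t0)" by (simp add: isCont_def)
        then have lim: "((\<lambda>s. z s y) \<longlongrightarrow> z t0 y) (at_left t0)"
          by (rule tendsto_mono[OF at_le[OF subset_UNIV]])
        have "eventually (\<lambda>s. s \<in> {0<..<t0}) (at_left t0)" by (rule eventually_at_left_real[OF t0pos])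
        then have ev: "eventually (\<lambda>s. 0 \<le> z s y) (at_left t0)"
        proof (rule eventually_mono)
          fix s assume "s \<in> {0<..<t0}"
          then show "0 \<le> z s y" using before[of s y] t0r y by auto
        qed
        show ?thesis by (rule tendsto_lowerbound[OF lim ev trivial_limit_at_left_real])
      qed
      have zx0: "z t0 x0 = 0" using zge[OF x0(1)] x0(2) by simp
      have zmin: "\<forall>y. z t0 x0 \<le> z t0 y"
      proof
        fix y
        obtain y' where y': "y' \<in> {0..L}" "u i t0 y = u i t0 y'"
          using per_red[OF L_pos pu[OF iN t0T]] by blast
        have "z t0 y = z t0 y'" unfolding z_def using y' by simp
        then show "z t0 x0 \<le> z t0 y" using zge[OF y'(1)] zx0 by simp
      qed
      have zd1: "\<forall>y. (z t0 has_real_derivative deriv (u i t0) y) (at y)"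
        unfolding z_def using du[OF iN t0T] by (auto intro!: derivative_eq_intros)
      from min_second_deriv[OF zd1 ddu[OF iN t0T, of x0] zmin]
      have u1: "deriv (u i t0) x0 = 0" and u2: "deriv (deriv (u i t0)) x0 \<ge> 0" by auto
      define e where "e = exp (lam * t0)"
      have epos: "e > 0" unfolding e_def by simp
      have ux0: "u i t0 x0 = - \<epsilon> * e" using zx0 unfolding z_def e_def by simp
      have dz: "rhs N L D h K (\<lambda>j. u j t0) i x0 + \<epsilon> * (exp (lam * t0) * lam)
          = D i * deriv (deriv (u i t0)) x0 + \<epsilon> * e * (W2 i t0 x0 + lam)"
        unfolding rhs_eq[OF t0T iN] u1 ux0 e_def by (simp add: algebra_simps)
      have "W2 i t0 x0 \<ge> - C" using W2b[OF t0r x0(1)] by simp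
      then have "W2 i t0 x0 + lam > 0" unfolding lam_def by simp
      then have p1: "\<epsilon> * e * (W2 i t0 x0 + lam) > 0" using eps epos by simp
      have p2: "D i * deriv (deriv (u i t0)) x0 \<ge> 0" by (intro mult_nonneg_nonneg) (use D_pos iN u2 in \<open>auto intro: less_imp_le\<close>)
      have dpos: "rhs N L D h K (\<lambda>j. u j t0) i x0 + \<epsilon> * (exp (lam * t0) * lam) > 0"
        unfolding dz using p1 p2 by simp
      obtain d where d: "d > 0" "\<forall>h>0. h < d \<longrightarrow> z (t0 - h) x0 < z t0 x0"
        using DERIV_pos_inc_left[OF zpde[of x0] dpos] by auto
      define hh where "hh = min (d/2) t0"
      have hh: "hh > 0" "hh < d" "hh \<le> t0" unfolding hh_def using d t0pos by auto
      have "z (t0 - hh) x0 < 0" using d(2) hh zx0 by auto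
      moreover have "z (t0 - hh) x0 > 0" using before[of "t0 - hh" x0] hh t0r x0 by auto
      ultimately show False by simp
    qed
    show ?thesis
    proof (intro ballI)
      fix s y assume sy: "s \<in> {0..T1}" "y \<in> {0..L}"
      show "u i s y \<ge> 0"
      proof (rule ccontr)
        assume "\<not> u i s y \<ge> 0"
        then have neg: "u i s y < 0" by simp
        define \<epsilon> where "\<epsilon> = - u i s y / (2 * exp (lam * s))"
        have "\<epsilon> > 0" unfolding \<epsilon>_def using neg by (intro divide_pos_pos) auto
        from main[OF this sy] have "u i s y + \<epsilon> * exp (lam * s) > 0" .
        moreover have "\<epsilon> * exp (lam * s) = - u i s y / 2" unfolding \<epsilon>_def by simp
        ultimately show False using neg by simp
      qed
    qed
  qed
  define A where "A = L1vec N L u0"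
  have L1eq: "L1vec N L (\<lambda>j. u j t) = A" if tT: "t \<in> T" for t
    unfolding L1vec_def A_def
  proof (rule sum.cong[OF refl])
    fix j assume "j \<in> {..<N}"
    then have jN: "j < N" by simp
    have "integral {0..L} (\<lambda>x. \<bar>u j t x\<bar>) = integral {0..L} (u j t)"
    proof (rule integral_cong)
      fix x assume "x \<in> {0..L}"
      then have "u j t x \<ge> 0" using pos[OF jN tT] tT unfolding T_def by auto
      then show "\<bar>u j t x\<bar> = u j t x" by simp
    qed
    also have "\<dots> = integral {0..L} (u0 j)" by (rule mass[OF jN tT])
    also have "\<dots> = integral {0..L} (\<lambda>x. \<bar>u0 j x\<bar>)"
    proof (rule integral_cong)
      fix x assume "x \<in> {0..L}"
      have "u0 j x > 0" using u0_pos jN by simp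
      then show "u0 j x = \<bar>u0 j x\<bar>" by simp
    qed
    finally show "integral {0..L} (\<lambda>x. \<bar>u j t x\<bar>) = integral {0..L} (\<lambda>x. \<bar>u0 j x\<bar>)" .
  qed
  have Tinf: "Tstar = \<infinity>"
  proof (rule ccontr)
    assume ninf: "Tstar \<noteq> \<infinity>"
    with Tstar_def have h1: "\<forall>t. 0 \<le> t \<and> ereal t < Tstar \<longrightarrow> L1vec N L (\<lambda>j. u j t) < 2 * L1vec N L u0"
      and h2: "((\<lambda>t. L1vec N L (\<lambda>j. u j t)) \<longlongrightarrow> 2 * L1vec N L u0) (at_left (real_of_ereal Tstar))"
      by auto
    have "L1vec N L (\<lambda>j. u j 0) < 2 * L1vec N L u0" using h1 T0 unfolding T_def by auto
    then have "A < 2 * A" using L1eq[OF T0] unfolding A_def by simp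
    then have Apos: "A > 0" by simp
    define R where "R = real_of_ereal Tstar"
    have TR: "Tstar = ereal R" using ninf T_pos unfolding R_def by (cases Tstar) auto
    have Rpos: "R > 0" using T_pos unfolding TR by (simp add: zero_ereal_def)
    have "eventually (\<lambda>t. t \<in> {0<..<R}) (at_left R)" by (rule eventually_at_left_real[OF Rpos])
    then have ev: "eventually (\<lambda>t. L1vec N L (\<lambda>j. u j t) = A) (at_left R)"
    proof (rule eventually_mono)
      fix t assume "t \<in> {0<..<R}"
      then have "t \<in> T" unfolding T_def TR by auto
      then show "L1vec N L (\<lambda>j. u j t) = A" by (rule L1eq)
    qed
    have l1: "((\<lambda>t. L1vec N L (\<lambda>j. u j t)) \<longlongrightarrow> A) (at_left R)"
      by (rule tendsto_eventually[OF ev])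
    have l2: "((\<lambda>t. L1vec N L (\<lambda>j. u j t)) \<longlongrightarrow> 2 * A) (at_left R)"
      using h2 unfolding R_def A_def .
    have "A = 2 * A" using tendsto_unique[OF trivial_limit_at_left_real l1 l2] .
    then show False using Apos by simp
  qed
  have "\<forall>t\<ge>0. L1vec N L (\<lambda>j. u j t) \<le> A"
  proof (intro allI impI)
    fix t :: real assume "t \<ge> 0"
    then have "t \<in> T" unfolding T_def Tinf by simp
    then show "L1vec N L (\<lambda>j. u j t) \<le> A" using L1eq by simp
  qed
  then show ?thesis using Tinf by blast
qed

end
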